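(* Let $D$ be a Hadamard plan of index $n$, let $p$ be a prime with $p\equiv1\pmod n$, and let $F$ be the periodic codebook of length $p$ from $D$. Then for $s\in\mathbb F_p$, \[\sum_{f\in F}P_{f,f}(s)=\begin{cases}(n-1)(p-1)&s=0,\\ 1-n&s\ne0,\end{cases}\] so that $\sum_{s\in\mathbb F_p^*}\left|\sum_{f\in F}P_{f,f}(s)\right|^2=(p-1)(n-1)^2$, $\sum_{s\in\mathbb F_p}\left|\sum_{f\in F}P_{f,f}(s)\right|^2=p(p-1)(n-1)^2$, and $\mathrm{PCDF}(F)=p/(p-1)$.
   Context: For periodic sequences $f,g:\mathbb Z/\ell\mathbb Z\to\mathbb C$ and $s\in\mathbb Z/\ell\mathbb Z$, the periodic crosscorrelation is $P_{f,g}(s)=\sum_{j\in\mathbb Z/\ell\mathbb Z}f_{j+s}\overline{g_j}$. For nonzero $f,g$, $\mathrm{PCDF}(f,g)=\sum_{s}|P_{f,g}(s)|^2/(P_{f,f}(0)P_{g,g}(0))$, and for a finite set $F$ of such sequences of common length, $\mathrm{PCDF}(F)=|F|^{-2}\sum_{f,g\in F}\mathrm{PCDF}(f,g)$. For each prime $p$, $\alpha_p$ is a fixed primitive element of $\mathbb F_p$ and $\mathbb F_p^{*n}$ is the subgroup of $n$th powers. A cyclotomic pattern of index $n$ is $d:\mathbb Z/n\mathbb Z\to\mathbb C$; the periodic sequence of length $p$ from $d$ has $f_0=0$, $f_h=d_k$ for $h\in\alpha_p^k\mathbb F_p^{*n}$. The periodic codebook of length $p$ from a set $D$ of patterns is the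 set of periodic sequences of length $p$ from the patterns in $D$. A Hadamard plan of index $n$ is a set of exactly $n-1$ cyclotomic patterns of index $n$ that are unimodular (entries of modulus $1$), balanced (entries sum to $0$), and pairwise orthogonal in $\mathbb C^n$. *)

theory Defs
  imports "HOL-Analysis.Analysis" "HOL-Number_Theory.Number_Theory"
begin

(* Periodic sequences of length l are functions nat => complex, read on indices 0..<l,
   with index arithmetic taken mod l. *)
definition pcorr :: "nat \<Rightarrow> (nat \<Rightarrow> complex) \<Rightarrow> (nat \<Rightarrow> complex) \<Rightarrow> nat \<Rightarrow> complex" where
  "pcorr l f g s = (\<Sum>j<l. f ((j + s) mod l) * cnj (g j))"

definition pcdf_pair :: "nat \<Rightarrow> (nat \<Rightarrow> complex) \<Rightarrow> (nat \<Rightarrow> complex) \<Rightarrow> complex" where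
  "pcdf_pair l f g =
     (\<Sum>s<l. complex_of_real ((cmod (pcorr l f g s))^2)) / (pcorr l f f 0 * pcorr l g g 0)"

definition pcdf_set :: "nat \<Rightarrow> (nat \<Rightarrow> complex) set \<Rightarrow> complex" where
  "pcdf_set l F = (\<Sum>f\<in>F. \<Sum>g\<in>F. pcdf_pair l f g) / (of_nat (card F))^2"

definition cyc_coset :: "nat \<Rightarrow> nat \<Rightarrow> nat \<Rightarrow> nat \<Rightarrow> nat set" where
  "cyc_coset p n \<alpha> k = {h \<in> {1..<p}. \<exists>x. [h = \<alpha>^k * x^n] (mod p) \<and> \<not> p dvd x}"

definition cyc_pattern :: "nat \<Rightarrow> (nat \<Rightarrow> complex) \<Rightarrow> bool" where
  "cyc_pattern n d \<longleftrightarrow> (\<forall>k\<ge>n. d k = 0)"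

definition cyc_seq :: "nat \<Rightarrow> nat \<Rightarrow> nat \<Rightarrow> (nat \<Rightarrow> complex) \<Rightarrow> nat \<Rightarrow> complex" where
  "cyc_seq p n \<alpha> d h =
     (if h mod p = 0 then 0 else d (THE k. k < n \<and> h mod p \<in> cyc_coset p n \<alpha> k))"

definition periodic_codebook :: "nat \<Rightarrow> nat \<Rightarrow> nat \<Rightarrow> (nat \<Rightarrow> complex) set \<Rightarrow> (nat \<Rightarrow> complex) set" where
  "periodic_codebook p n \<alpha> D = (\<lambda>d. cyc_seq p n \<alpha> d) ` D"

definition hadamard_plan :: "nat \<Rightarrow> (nat \<Rightarrow> complex) set \<Rightarrow> bool" where
  "hadamard_plan n D \<longleftrightarrow>
     finite D \<and> card D = n - 1 \<and>
     (\<forall>d\<in>D. cyc_pattern n d) \<and>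
     (\<forall>d\<in>D. \<forall>k<n. cmod (d k) = 1) \<and>
     (\<forall>d\<in>D. (\<Sum>k<n. d k) = 0) \<and>
     (\<forall>d\<in>D. \<forall>e\<in>D. d \<noteq> e \<longrightarrow> (\<Sum>k<n. d k * cnj (e k)) = 0)"

end

theory Submission imports Defs "Jordan_Normal_Form.Determinant" begin

lemma col_orth:
  fixes V :: "nat \<Rightarrow> nat \<Rightarrow> complex" and c :: complex
  assumes rows: "\<And>r s. r < n \<Longrightarrow> s < n \<Longrightarrow> (\<Sum>k<n. V r k * cnj (V s k)) = (if r = s then c else 0)"
    and c: "c \<noteq> 0"
    and a: "a < n" and b: "b < n"
  shows "(\<Sum>r<n. cnj (V r a) * V r b) = (if a = b then c else 0)"
proof -
  define A where "A = mat n n (\<lambda>(r,k). V r k / c)"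
  define B where "B = mat n n (\<lambda>(k,s). cnj (V s k))"
  have A: "A \<in> carrier_mat n n" and B: "B \<in> carrier_mat n n" unfolding A_def B_def by auto
  have "A * B = 1\<^sub>m n"
  proof (rule eq_matI)
    fix i j assume ij: "i < dim_row (1\<^sub>m n)" "j < dim_col (1\<^sub>m n)"
    then have i: "i < n" and j: "j < n" by auto
    have "(A * B) $$ (i,j) = (\<Sum>k<n. V i k / c * cnj (V j k))"
      using i j unfolding A_def B_def by (simp add: scalar_prod_def atLeast0LessThan)
    also have "\<dots> = (\<Sum>k<n. V i k * cnj (V j k)) / c"
      by (simp add: sum_divide_distrib)
    also have "\<dots> = 1\<^sub>m n $$ (i,j)" using rows[OF i j] c i j by simp
    finally show "(A * B) $$ (i,j) = 1\<^sub>m n $$ (i,j)" .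
  qed (auto simp: A_def B_def)
  then have BA: "B * A = 1\<^sub>m n" using mat_mult_left_right_inverse[OF A B] by blast
  have "(B * A) $$ (a,b) = (\<Sum>r<n. cnj (V r a) * (V r b / c))"
    using a b unfolding A_def B_def by (simp add: scalar_prod_def atLeast0LessThan)
  also have "\<dots> = (\<Sum>r<n. cnj (V r a) * V r b) / c"
    by (simp add: sum_divide_distrib)
  finally have "(\<Sum>r<n. cnj (V r a) * V r b) / c = (if a = b then 1 else 0)"
    using BA a b by simp
  then show ?thesis using c by (auto simp: field_simps split: if_splits)
qed


locale cyc =
  fixes p n g :: nat
  assumes prime: "prime p" and root: "residue_primroot p g"
    and n2: "n \<ge> 2" and ndvd: "n dvd (p - 1)"
begin

lemma p2: "p \<ge> 2" using prime prime_ge_2_nat by blast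
lemma q_pos: "p - 1 > 0" using p2 by simp
lemma n_le: "n \<le> p - 1" using ndvd q_pos dvd_imp_le by blast
lemma cop: "coprime p g" using root by (simp add: residue_primroot_def)
lemma ordg: "ord p g = p - 1" using root prime totient_prime by (simp add: residue_primroot_def)
lemma gen: "bij_betw (\<lambda>i. g ^ i mod p) {..<p-1} {0<..<p}"
  using residue_primroot_is_generator[OF _ root] p2 prime totient_prime totatives_prime by force

lemma exp_cong: "[g^a = g^b] (mod p) \<longleftrightarrow> [a = b] (mod (p-1))"
  using order_divides_expdiff[OF cop] ordg by simp

lemma not_dvd_g: "\<not> p dvd g^e"
proof
  assume "p dvd g^e"
  then have "p dvd g" using prime prime_dvd_power by blast
  then have "is_unit p" using cop coprime_absorb_left[of p g] by blast
  then show False using p2 by simp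
qed

definition dlog :: "nat \<Rightarrow> nat" where
  "dlog h = (THE e. e < p-1 \<and> [g^e = h] (mod p))"

lemma dlog_ex1: assumes "\<not> p dvd h" shows "\<exists>!e. e < p-1 \<and> [g^e = h] (mod p)"
proof -
  have img: "(\<lambda>i. g^i mod p) ` {..<p-1} = {0<..<p}" and inj: "inj_on (\<lambda>i. g^i mod p) {..<p-1}"
    using gen by (simp_all add: bij_betw_def)
  have "h mod p \<noteq> 0" using assms by (simp add: dvd_eq_mod_eq_0)
  then have "h mod p \<in> {0<..<p}" using p2 by simp
  then have "h mod p \<in> (\<lambda>i. g^i mod p) ` {..<p-1}" unfolding img .
  then obtain e where e: "e \<in> {..<p-1}" "h mod p = g^e mod p" by blast
  have u: "e' = e" if "e' < p-1" "[g^e' = h] (mod p)" for e'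
  proof -
    have "g^e' mod p = g^e mod p" using that(2) e(2) unfolding cong_def by (rule trans)
    then show ?thesis by (rule inj_onD[OF inj]) (use that e in auto)
  qed
  have "e < p-1 \<and> [g^e = h] (mod p)" using e by (simp add: cong_def)
  then show ?thesis using u by (intro ex1I[of _ e]) auto
qed

lemma dlog: assumes "\<not> p dvd h" shows "dlog h < p-1" "[g^(dlog h) = h] (mod p)"
  using theI'[OF dlog_ex1[OF assms]] unfolding dlog_def by auto

lemma dlog_unique: assumes "e < p-1" "[g^e = h] (mod p)" shows "dlog h = e"
proof -
  have "\<not> p dvd h"
  proof
    assume "p dvd h"
    then have "p dvd g^e" using assms(2) by (simp add: cong_dvd_iff)
    then show False using not_dvd_g by blast
  qed
  then show ?thesis unfolding dlog_def using dlog_ex1 assms by (intro the1_equality) auto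
qed

lemma dlog_mod[simp]: "dlog (h mod p) = dlog h"
  by (simp add: dlog_def cong_def)

lemma not_dvd_mult: "\<not> p dvd x \<Longrightarrow> \<not> p dvd y \<Longrightarrow> \<not> p dvd (x*y)"
  using prime prime_dvd_mult_iff by blast

lemma dlog_mult: assumes "\<not> p dvd x" "\<not> p dvd y"
  shows "[dlog (x*y) = dlog x + dlog y] (mod (p-1))"
proof -
  have "[g^(dlog (x*y)) = x*y] (mod p)" using dlog not_dvd_mult assms by blast
  moreover have "[g^(dlog x + dlog y) = x*y] (mod p)"
    using dlog(2)[OF assms(1)] dlog(2)[OF assms(2)] by (simp add: power_add cong_mult)
  ultimately have "[g^(dlog (x*y)) = g^(dlog x + dlog y)] (mod p)" by (simp add: cong_def)
  then show ?thesis using exp_cong[of "dlog (x*y)" "dlog x + dlog y"] by simp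
qed

lemma dlog_mult_n: assumes "\<not> p dvd x" "\<not> p dvd y"
  shows "[dlog (x*y) = dlog x + dlog y] (mod n)"
  using dlog_mult[OF assms] ndvd cong_dvd_modulus_nat by blast

lemma coset_iff: assumes k: "k < n"
  shows "h \<in> cyc_coset p n g k \<longleftrightarrow> h \<in> {1..<p} \<and> [dlog h = k] (mod n)"
proof
  assume h: "h \<in> cyc_coset p n g k"
  then obtain x where x: "[h = g^k * x^n] (mod p)" "\<not> p dvd x" and hr: "h \<in> {1..<p}"
    unfolding cyc_coset_def by auto
  have hnd: "\<not> p dvd h" using hr by auto
  have "[g^(dlog h) = g^k * (g^(dlog x))^n] (mod p)"
  proof -
    have D1: "g^(dlog h) mod p = h mod p" using dlog(2)[OF hnd] by (simp add: cong_def)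
    have D2: "g^(dlog x) mod p = x mod p" using dlog(2)[OF x(2)] by (simp add: cong_def)
    have e1: "(g^(dlog x))^n mod p = x^n mod p" by (metis D2 power_mod)
    have e2: "(g^k * (g^(dlog x))^n) mod p = (g^k * x^n) mod p" by (metis e1 mod_mult_right_eq)
    show ?thesis using D1 x(1) e2 by (simp add: cong_def)
  qed
  then have "[g^(dlog h) = g^(k + n * dlog x)] (mod p)"
    by (simp add: power_add power_mult[symmetric] mult.commute)
  then have "[dlog h = k + n * dlog x] (mod (p-1))" using exp_cong[of "dlog h" "k + n * dlog x"] by simp
  then have "[dlog h = k + n * dlog x] (mod n)" using ndvd cong_dvd_modulus_nat by blast
  then have "[dlog h = k] (mod n)"
    by (simp add: cong_def)
  then show "h \<in> {1..<p} \<and> [dlog h = k] (mod n)" using hr by blast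
next
  assume h: "h \<in> {1..<p} \<and> [dlog h = k] (mod n)"
  have hnd: "\<not> p dvd h" using h by auto
  define t where "t = dlog h div n"
  have c1: "[g^(dlog h) = h] (mod p)" using dlog(2)[OF hnd] .
  have "dlog h = dlog h mod n + n * t" unfolding t_def by simp
  moreover have "dlog h mod n = k" using h k by (simp add: cong_def)
  ultimately have "g^(dlog h) = g^k * (g^t)^n"
    by (simp add: power_add power_mult[symmetric] mult.commute)
  then have "[h = g^k * (g^t)^n] (mod p)" using c1 by (simp add: cong_sym)
  then show "h \<in> cyc_coset p n g k" using h not_dvd_g unfolding cyc_coset_def by blast
qed

lemma cls: assumes "h mod p \<noteq> 0"
  shows "(THE k. k < n \<and> h mod p \<in> cyc_coset p n g k) = dlog h mod n"
proof (rule the_equality)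
  have "h mod p \<in> {1..<p}" using assms p2 by auto
  moreover have "[dlog (h mod p) = dlog h mod n] (mod n)" by (simp add: cong_def)
  ultimately show "dlog h mod n < n \<and> h mod p \<in> cyc_coset p n g (dlog h mod n)"
    using coset_iff n2 by simp
next
  fix k assume "k < n \<and> h mod p \<in> cyc_coset p n g k"
  then have "k < n" "[dlog h = k] (mod n)" using coset_iff by auto
  then show "k = dlog h mod n" by (simp add: cong_def)
qed

lemma seq_eq: "cyc_seq p n g d h = (if h mod p = 0 then 0 else d (dlog h mod n))"
  by (simp add: cyc_seq_def cls)

definition C0 where "C0 = {t \<in> {1..<p}. n dvd dlog t}"

lemma card_mult: "card {e. e < p-1 \<and> n dvd e} = (p-1) div n"
proof -
  have "{e. e < p-1 \<and> n dvd e} = (\<lambda>i. n*i) ` {..<(p-1) div n}"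
  proof (intro equalityI subsetI)
    fix e assume "e \<in> {e. e < p-1 \<and> n dvd e}"
    then have "e < p-1" "n dvd e" by auto
    then obtain i where i: "e = n*i" by blast
    have "n * i < n * ((p-1) div n)" using \<open>e < p-1\<close> i ndvd by simp
    then have "i < (p-1) div n" by simp
    then show "e \<in> (\<lambda>i. n*i) ` {..<(p-1) div n}" using i by blast
  next
    fix x assume "x \<in> (\<lambda>i. n*i) ` {..<(p-1) div n}"
    then obtain i where x: "x = n*i" "i < (p-1) div n" by auto
    then have "i < (p-1) div n" by simp
    then have "n * i < n * ((p-1) div n)" using n2 by (intro mult_strict_left_mono) auto
    moreover have "n * ((p-1) div n) = p - 1" using ndvd by simp
    ultimately have "n * i < p - 1" by linarith
    then show "x \<in> {e. e < p-1 \<and> n dvd e}" using x by auto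
  qed
  moreover have "inj_on (\<lambda>i. n*i) {..<(p-1) div n}" using n2 by (auto simp: inj_on_def)
  ultimately show ?thesis by (simp add: card_image)
qed

lemma card_C0: "card C0 = (p-1) div n"
proof -
  have "C0 = (\<lambda>i. g^i mod p) ` {e. e < p-1 \<and> n dvd e}"
  proof safe
    fix t assume "t \<in> C0"
    then have t: "t \<in> {1..<p}" "n dvd dlog t" unfolding C0_def by auto
    then have "\<not> p dvd t" by auto
    then have "dlog t < p - 1" "g^(dlog t) mod p = t" using dlog t by (auto simp: cong_def)
    then show "t \<in> (\<lambda>i. g^i mod p) ` {e. e < p-1 \<and> n dvd e}" using t by force
  next
    fix e assume e: "e < p-1" "n dvd e"
    have "g^e mod p \<in> {0<..<p}" using gen e unfolding bij_betw_def by auto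
    moreover have "dlog (g^e mod p) = e" using dlog_unique[OF e(1)] by (simp add: cong_def)
    ultimately show "g^e mod p \<in> C0" using e unfolding C0_def by auto
  qed
  moreover have "inj_on (\<lambda>i. g^i mod p) {e. e < p-1 \<and> n dvd e}"
    using gen unfolding bij_betw_def by (auto intro: inj_on_subset)
  ultimately show ?thesis using card_mult by (simp add: card_image)
qed

lemma one_C0: "1 \<in> C0"
proof -
  have "dlog 1 = 0" using dlog_unique[of 0 1] q_pos by simp
  then show ?thesis using p2 unfolding C0_def by auto
qed

lemma count: assumes s: "0 < s" "s < p"
  shows "card {j \<in> {1..<p}. (j+s) mod p \<noteq> 0 \<and> dlog (j+s) mod n = dlog j mod n} = (p-1) div n - 1"
proof -
  define S where "S = {j \<in> {1..<p}. (j+s) mod p \<noteq> 0 \<and> dlog (j+s) mod n = dlog j mod n}"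
  define T where "T = C0 - {1}"
  define \<phi> where "\<phi> c = (THE j. 0 < j \<and> j < p \<and> [(c-1) * j = s] (mod p))" for c
  have "\<not> p dvd s" using s by (auto dest: dvd_imp_le)
  then have cops: "coprime p s" using prime prime_imp_coprime[of p s] by blast
  have T1: "1 < c \<and> c < p" if "c \<in> T" for c using that unfolding T_def C0_def by auto
  have phi: "0 < \<phi> c \<and> \<phi> c < p \<and> [(c-1) * \<phi> c = s] (mod p)" if "c \<in> T" for c
  proof -
    have "\<exists>!j. 0 < j \<and> j < p \<and> [(c-1) * j = s] (mod p)"
      by (rule cong_solve_unique_nontrivial[OF prime cops]) (use T1[OF that] in auto)
    then show ?thesis unfolding \<phi>_def by (rule theI')
  qed
  have phi_uniq: "\<phi> c = j" if "c \<in> T" "0 < j" "j < p" "[(c-1) * j = s] (mod p)" for c j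
  proof -
    have "\<exists>!j. 0 < j \<and> j < p \<and> [(c-1) * j = s] (mod p)"
      by (rule cong_solve_unique_nontrivial[OF prime cops]) (use T1[OF that(1)] in auto)
    then show ?thesis using phi[OF that(1)] that by blast
  qed
  have "bij_betw \<phi> T S"
    unfolding bij_betw_def
  proof (intro conjI)
    show "inj_on \<phi> T"
    proof (rule inj_onI)
      fix c c' assume c: "c \<in> T" "c' \<in> T" "\<phi> c = \<phi> c'"
      define j where "j = \<phi> c"
      have j: "0 < j" "j < p" "[(c-1) * j = s] (mod p)" "[(c'-1) * j = s] (mod p)"
        using phi[OF c(1)] phi[OF c(2)] c(3) unfolding j_def by auto
      have "\<not> p dvd j" using j by (auto dest: dvd_imp_le)
      then have "coprime p j" using prime prime_imp_coprime[of p j] by blast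
      then have "coprime j p" by (simp add: coprime_commute)
      moreover have "[j * (c-1) = j * (c'-1)] (mod p)" using j(3,4)
        by (simp add: cong_def mult.commute)
      ultimately have "[c - 1 = c' - 1] (mod p)" using cong_mult_lcancel_nat by blast
      then have "c - 1 = c' - 1" using T1[OF c(1)] T1[OF c(2)] cong_less_modulus_unique_nat by fastforce
      then show "c = c'" using T1[OF c(1)] T1[OF c(2)] by linarith
    qed
  next
    show "\<phi> ` T = S"
    proof safe
      fix c assume c: "c \<in> T"
      define j where "j = \<phi> c"
      have j: "0 < j" "j < p" "[(c-1) * j = s] (mod p)" using phi[OF c] unfolding j_def by auto
      have cT: "1 < c" "c < p" "n dvd dlog c" using T1[OF c] c unfolding T_def C0_def by auto
      have "c * j = (c-1) * j + j" using cT by (simp add: algebra_simps)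
      moreover have "[(c-1)*j + j = s + j] (mod p)" by (rule cong_add[OF j(3) cong_refl])
      ultimately have "[c*j = j+s] (mod p)" by (simp add: add.commute)
      then have cj: "[j + s = c * j] (mod p)" by (rule cong_sym)
      have ndc: "\<not> p dvd c" "\<not> p dvd j" using cT j by auto
      have ncj: "\<not> p dvd (c*j)" using not_dvd_mult ndc by blast
      have m1: "(j+s) mod p \<noteq> 0" using cj ncj by (simp add: cong_def dvd_eq_mod_eq_0)
      have "dlog (j+s) = dlog (c*j)" using cj unfolding cong_def by (metis dlog_mod)
      moreover have "[dlog (c*j) = dlog c + dlog j] (mod n)" using dlog_mult_n ndc by blast
      moreover have "dlog c mod n = 0" using cT(3) by simp
      moreover then have "(dlog c + dlog j) mod n = dlog j mod n" by (metis mod_add_left_eq add_0)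
      ultimately have "dlog (j+s) mod n = dlog j mod n" by (simp add: cong_def)
      then show "\<phi> c \<in> S" unfolding S_def j_def[symmetric] using j m1 by auto
    next
      fix j assume jS: "j \<in> S"
      then have j: "0 < j" "j < p" "(j+s) mod p \<noteq> 0" "dlog (j+s) mod n = dlog j mod n"
        unfolding S_def by auto
      have copjs: "coprime p (j+s)" using j(3) prime prime_imp_coprime[of p "j+s"] by (auto simp: dvd_eq_mod_eq_0)
      obtain c where c: "0 < c" "c < p" "[j * c = j + s] (mod p)"
        using cong_solve_unique_nontrivial[OF prime copjs j(1,2)] by blast
      have c1: "c \<noteq> 1"
      proof
        assume "c = 1"
        then have "[j + 0 = j + s] (mod p)" using c by simp
        then have "[0 = s] (mod p)" using cong_add_lcancel_nat by blast
        then show False using s by (simp add: cong_def)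
      qed
      have ndc: "\<not> p dvd c" "\<not> p dvd j" using c j by auto
      have "dlog (j*c) = dlog (j+s)" using c(3) unfolding cong_def by (metis dlog_mod)
      moreover have "[dlog (j*c) = dlog j + dlog c] (mod n)" using dlog_mult_n ndc by blast
      ultimately have "[dlog j + dlog c = dlog j + 0] (mod n)" using j(4)
        unfolding cong_def by simp
      then have "[dlog c = 0] (mod n)" using cong_add_lcancel_nat by blast
      then have "n dvd dlog c" by (simp add: cong_def dvd_eq_mod_eq_0)
      then have cT: "c \<in> T" using c c1 unfolding T_def C0_def by auto
      have "j * c = (c-1) * j + j" using c c1 by (cases c) (auto simp: algebra_simps)
      then have "[(c-1) * j + j = s + j] (mod p)" using c(3) by (simp add: add.commute)
      then have "[(c-1) * j = s] (mod p)" using cong_add_rcancel_nat by blast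
      then have "\<phi> c = j" using phi_uniq[OF cT j(1,2)] by blast
      then show "j \<in> \<phi> ` T" using cT by blast
    qed
  qed
  then have "card S = card T" by (simp add: bij_betw_same_card)
  also have "card T = (p-1) div n - 1" unfolding T_def using card_C0 one_C0
    by (simp add: C0_def)
  finally show ?thesis unfolding S_def .
qed

end


lemma shift_sum:
  assumes "0 < (p::nat)"
  shows "(\<Sum>j<p. h ((j + c) mod p)) = (\<Sum>j<p. h j)"
proof -
  have inj: "inj_on (\<lambda>j. (j + c) mod p) {..<p}"
  proof (rule inj_onI)
    fix x y assume xy: "x \<in> {..<p}" "y \<in> {..<p}" "(x + c) mod p = (y + c) mod p"
    then have "[x + c = y + c] (mod p)" by (simp add: cong_def)
    then have "[x = y] (mod p)" using cong_add_rcancel_nat by blast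
    then show "x = y" using xy cong_less_modulus_unique_nat by auto
  qed
  have img: "(\<lambda>j. (j + c) mod p) ` {..<p} = {..<p}"
    by (rule endo_inj_surj) (use inj assms in auto)
  have "(\<Sum>j<p. h ((j + c) mod p)) = sum h ((\<lambda>j. (j + c) mod p) ` {..<p})"
    by (simp add: sum.reindex[OF inj])
  also have "\<dots> = (\<Sum>j<p. h j)" by (simp only: img)
  finally show ?thesis .
qed

lemma unimod_sq: "cmod z = 1 \<Longrightarrow> z * cnj z = 1"
  using complex_norm_square[of z] by simp

lemma hadamard_cols:
  assumes H: "hadamard_plan n D" and n: "n \<ge> 2" and a: "a < n" and b: "b < n"
  shows "(\<Sum>d\<in>D. d a * cnj (d b)) = (if a = b then of_nat n else 0) - 1"
proof -
  define one :: "nat \<Rightarrow> complex" where "one = (\<lambda>_. 1)"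
  define D' where "D' = insert one D"
  have fin: "finite D" and cD: "card D = n - 1" and unim: "\<And>d k. d \<in> D \<Longrightarrow> k < n \<Longrightarrow> cmod (d k) = 1"
    and bal: "\<And>d. d \<in> D \<Longrightarrow> (\<Sum>k<n. d k) = 0"
    and orth: "\<And>d e. d \<in> D \<Longrightarrow> e \<in> D \<Longrightarrow> d \<noteq> e \<Longrightarrow> (\<Sum>k<n. d k * cnj (e k)) = 0"
    using H unfolding hadamard_plan_def by auto
  have one_nD: "one \<notin> D"
  proof
    assume "one \<in> D"
    then have "(\<Sum>k<n. one k) = 0" using bal by blast
    then show False using n unfolding one_def by simp
  qed
  have finD': "finite D'" and cD': "card D' = n" using fin cD one_nD n unfolding D'_def by auto
  obtain h where h: "bij_betw h {0..<n} D'" using ex_bij_betw_nat_finite[OF finD'] cD' by metis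
  have hin: "h r \<in> D'" if "r < n" for r using h that unfolding bij_betw_def by auto
  have norm: "(\<Sum>k<n. v k * cnj (v k)) = of_nat n" if "v \<in> D'" for v
  proof -
    have "(\<Sum>k<n. v k * cnj (v k)) = (\<Sum>k<n. 1)"
    proof (rule sum.cong[OF refl])
      fix k assume "k \<in> {..<n}"
      then show "v k * cnj (v k) = 1" using that unim unimod_sq unfolding D'_def one_def by auto
    qed
    then show ?thesis by simp
  qed
  have orth': "(\<Sum>k<n. v k * cnj (w k)) = 0" if vw: "v \<in> D'" "w \<in> D'" "v \<noteq> w" for v w
  proof -
    consider "v \<in> D" "w \<in> D" | "v = one" "w \<in> D" | "v \<in> D" "w = one"
      by (cases "v = one"; cases "w = one") (use vw in \<open>auto simp: D'_def\<close>)
    then show ?thesis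
    proof cases
      case 1 then show ?thesis using orth vw by blast
    next
      case 2
      have "(\<Sum>k<n. v k * cnj (w k)) = cnj (\<Sum>k<n. w k)" using 2 unfolding one_def by simp
      then show ?thesis using bal 2 by simp
    next
      case 3
      have "(\<Sum>k<n. v k * cnj (w k)) = (\<Sum>k<n. v k)" using 3 unfolding one_def by simp
      then show ?thesis using bal 3 by simp
    qed
  qed
  have rows: "(\<Sum>k<n. h r k * cnj (h s k)) = (if r = s then of_nat n else 0)" if "r < n" "s < n" for r s
  proof (cases "r = s")
    case True then show ?thesis using norm hin that by simp
  next
    case False
    then have "h r \<noteq> h s" using h that unfolding bij_betw_def inj_on_def by auto
    then show ?thesis using orth' hin that False by simp
  qed
  have col: "(\<Sum>r<n. cnj (h r b) * h r a) = (if b = a then of_nat n else 0)"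
    by (rule col_orth[of n "\<lambda>r k. h r k"]) (use rows n a b in auto)
  have "(\<Sum>r<n. cnj (h r b) * h r a) = (\<Sum>v\<in>D'. cnj (v b) * v a)"
    using sum.reindex_bij_betw[OF h, of "\<lambda>v. cnj (v b) * v a"] by (simp add: atLeast0LessThan)
  also have "\<dots> = 1 + (\<Sum>d\<in>D. cnj (d b) * d a)"
    unfolding D'_def using fin one_nD by (simp add: one_def)
  finally have "(\<Sum>d\<in>D. cnj (d b) * d a) = (if b = a then of_nat n else 0) - 1"
    using col by (simp add: algebra_simps)
  then show ?thesis by (simp add: mult.commute eq_commute)
qed

lemma corr_sq:
  assumes "0 < (p::nat)"
  shows "(\<Sum>s<p. complex_of_real ((cmod (pcorr p f g s))\<^sup>2)) = (\<Sum>s<p. pcorr p f f s * cnj (pcorr p g g s))"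
proof -
  define T where "T s j k = f ((j + s) mod p) * cnj (g j) * (cnj (f ((k + s) mod p)) * g k)" for s j k
  define U where "U t a k = f ((a + t) mod p) * cnj (f a) * (cnj (g ((k + t) mod p)) * g k)" for t a k
  have "(\<Sum>s<p. complex_of_real ((cmod (pcorr p f g s))\<^sup>2)) = (\<Sum>s<p. pcorr p f g s * cnj (pcorr p f g s))"
    by (rule sum.cong[OF refl]) (rule complex_norm_square)
  also have "\<dots> = (\<Sum>s<p. \<Sum>j<p. \<Sum>k<p. T s j k)"
    unfolding pcorr_def T_def by (simp add: sum_product)
  also have "\<dots> = (\<Sum>s<p. \<Sum>k<p. \<Sum>j<p. T s j k)"
    by (rule sum.cong[OF refl], rule sum.swap)
  also have "\<dots> = (\<Sum>k<p. \<Sum>s<p. \<Sum>j<p. T s j k)"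
    by (rule sum.swap)
  also have "\<dots> = (\<Sum>k<p. \<Sum>t<p. \<Sum>a<p. U t a k)"
  proof (rule sum.cong[OF refl])
    fix k assume "k \<in> {..<p}"
    then have k: "k < p" by simp
    have "(\<Sum>s<p. \<Sum>j<p. T s j k) = (\<Sum>s<p. \<Sum>t<p. T s ((t + k) mod p) k)"
      by (rule sum.cong[OF refl]) (rule shift_sum[OF assms, symmetric])
    also have "\<dots> = (\<Sum>t<p. \<Sum>s<p. T s ((t + k) mod p) k)" by (rule sum.swap)
    also have "\<dots> = (\<Sum>t<p. \<Sum>a<p. T ((a + (p - k)) mod p) ((t + k) mod p) k)"
      by (rule sum.cong[OF refl]) (rule shift_sum[OF assms, symmetric])
    also have "\<dots> = (\<Sum>t<p. \<Sum>a<p. U t a k)"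
    proof (intro sum.cong refl)
      fix t a assume "t \<in> {..<p}" "a \<in> {..<p}"
      then have a: "a < p" by simp
      have e1: "((t + k) mod p + (a + (p - k)) mod p) mod p = (a + t) mod p"
      proof -
        have "t + k + (a + (p - k)) = (a + t) + p" using k by simp
        then show ?thesis by (metis mod_add_eq mod_add_self2)
      qed
      have e2: "(k + (a + (p - k)) mod p) mod p = a"
      proof -
        have "k + (a + (p - k)) = a + p" using k by simp
        then show ?thesis using a by (metis mod_add_right_eq mod_add_self2 mod_less)
      qed
      show "T ((a + (p - k)) mod p) ((t + k) mod p) k = U t a k"
        unfolding T_def U_def using e1 e2 by (simp add: add.commute mult.commute mult.left_commute)
    qed
    finally show "(\<Sum>s<p. \<Sum>j<p. T s j k) = (\<Sum>t<p. \<Sum>a<p. U t a k)" .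
  qed
  also have "\<dots> = (\<Sum>t<p. \<Sum>k<p. \<Sum>a<p. U t a k)" by (rule sum.swap)
  also have "\<dots> = (\<Sum>t<p. \<Sum>a<p. \<Sum>k<p. U t a k)"
    by (rule sum.cong[OF refl], rule sum.swap)
  also have "\<dots> = (\<Sum>s<p. pcorr p f f s * cnj (pcorr p g g s))"
    unfolding pcorr_def U_def by (simp add: sum_product)
  finally show ?thesis .
qed


context cyc
begin

lemma sum_corr:
  assumes H: "hadamard_plan n D" and s: "s < p"
  shows "(\<Sum>d\<in>D. pcorr p (cyc_seq p n g d) (cyc_seq p n g d) s) =
           (if s = 0 then of_nat (n - 1) * of_nat (p - 1) else 1 - of_nat n)"
proof -
  define same where "same j \<longleftrightarrow> dlog (j+s) mod n = dlog j mod n" for j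
  define A where "A = {j \<in> {..<p}. j \<noteq> 0 \<and> (j+s) mod p \<noteq> 0}"
  define X where "X j = (if same j then (of_nat n :: complex) else 0)" for j
  have n0: "0 < n" using n2 by simp
  have "(\<Sum>d\<in>D. pcorr p (cyc_seq p n g d) (cyc_seq p n g d) s) =
        (\<Sum>j<p. \<Sum>d\<in>D. cyc_seq p n g d ((j + s) mod p) * cnj (cyc_seq p n g d j))"
    unfolding pcorr_def by (rule sum.swap)
  also have "\<dots> = (\<Sum>j<p. if j \<noteq> 0 \<and> (j+s) mod p \<noteq> 0 then X j - 1 else 0)"
  proof (rule sum.cong[OF refl])
    fix j assume "j \<in> {..<p}"
    then have j: "j < p" by simp
    show "(\<Sum>d\<in>D. cyc_seq p n g d ((j + s) mod p) * cnj (cyc_seq p n g d j)) =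
          (if j \<noteq> 0 \<and> (j+s) mod p \<noteq> 0 then X j - 1 else 0)"
    proof (cases "j \<noteq> 0 \<and> (j+s) mod p \<noteq> 0")
      case True
      have "(\<Sum>d\<in>D. cyc_seq p n g d ((j + s) mod p) * cnj (cyc_seq p n g d j)) =
            (\<Sum>d\<in>D. d (dlog (j+s) mod n) * cnj (d (dlog j mod n)))"
        using True j by (simp add: seq_eq)
      also have "\<dots> = X j - 1"
        using hadamard_cols[OF H n2, of "dlog (j+s) mod n" "dlog j mod n"] n0
        unfolding X_def same_def by simp
      finally show ?thesis using True by simp
    next
      case False
      then show ?thesis using j by (auto simp: seq_eq)
    qed
  qed
  also have "\<dots> = (\<Sum>j\<in>A. X j - 1)"
    unfolding A_def by (rule sum.inter_filter[symmetric]) simp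
  also have "\<dots> = (\<Sum>j\<in>A. X j) - of_nat (card A)"
    by (simp add: sum_subtractf)
  also have "(\<Sum>j\<in>A. X j) = of_nat n * of_nat (card {j \<in> A. same j})"
  proof -
    have "(\<Sum>j\<in>A. X j) = (\<Sum>j\<in>{j \<in> A. same j}. of_nat n)"
      unfolding X_def A_def by (rule sum.inter_filter[symmetric]) simp
    then show ?thesis by simp
  qed
  finally have main: "(\<Sum>d\<in>D. pcorr p (cyc_seq p n g d) (cyc_seq p n g d) s) =
      of_nat n * of_nat (card {j \<in> A. same j}) - of_nat (card A)" .
  show ?thesis
  proof (cases "s = 0")
    case True
    have "A = {1..<p}" unfolding A_def using True by auto
    moreover have "{j \<in> A. same j} = A" using True unfolding same_def by auto
    ultimately have "(\<Sum>d\<in>D. pcorr p (cyc_seq p n g d) (cyc_seq p n g d) s) =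
        of_nat n * of_nat (p - 1) - of_nat (p - 1)" using main by simp
    also have "\<dots> = of_nat (n - 1) * of_nat (p - 1)"
      using n2 by (simp add: of_nat_diff algebra_simps)
    finally show ?thesis using True by simp
  next
    case False
    then have s0: "0 < s" by simp
    have "A = {1..<p} - {p - s}"
    proof (intro equalityI subsetI)
      fix j assume "j \<in> A"
      then have j: "j < p" "j \<noteq> 0" "(j+s) mod p \<noteq> 0" unfolding A_def by auto
      have "j \<noteq> p - s" using j(3) s by auto
      then show "j \<in> {1..<p} - {p - s}" using j by auto
    next
      fix j assume "j \<in> {1..<p} - {p - s}"
      then have j: "1 \<le> j" "j < p" "j \<noteq> p - s" by auto
      have "(j+s) mod p \<noteq> 0"
      proof
        assume "(j+s) mod p = 0"
        moreover have "j + s < 2 * p" using j s by simp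
        moreover have "0 < j + s" using j by simp
        ultimately have "j + s = p"
        proof -
          assume m: "(j+s) mod p = 0" and lt: "j + s < 2 * p" and gt: "0 < j + s"
          obtain q where q: "j + s = p * q" using m by (auto simp: dvd_eq_mod_eq_0[symmetric])
          have "q \<noteq> 0" using q gt by auto
          moreover have "p * q < p * 2" using q lt by (simp add: mult.commute)
          then have "q < 2" by simp
          ultimately have "q = 1" by simp
          then show ?thesis using q by simp
        qed
        then show False using j by auto
      qed
      then show "j \<in> A" unfolding A_def using j by auto
    qed
    then have cA: "card A = p - 2" using s s0 by (simp add: card_Diff_singleton)
    have "{j \<in> A. same j} = {j \<in> {1..<p}. (j+s) mod p \<noteq> 0 \<and> dlog (j+s) mod n = dlog j mod n}"
      unfolding A_def same_def by auto
    then have cS: "card {j \<in> A. same j} = (p-1) div n - 1" using count[OF s0 s] by simp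
    have q1: "n * ((p-1) div n) = p - 1" using ndvd by simp
    have q2: "(p-1) div n \<ge> 1" using q1 q_pos by (cases "(p-1) div n = 0") auto
    have "n * ((p-1) div n - 1) = p - 1 - n" using q1 by (simp add: diff_mult_distrib2)
    then have "(of_nat n :: complex) * of_nat ((p-1) div n - 1) = of_nat (p - 1 - n)"
      by (metis of_nat_mult)
    also have "\<dots> = of_nat p - 1 - of_nat n" using n_le p2 by (simp add: of_nat_diff)
    finally have e: "(of_nat n :: complex) * of_nat ((p-1) div n - 1) = of_nat p - 1 - of_nat n" .
    have "(of_nat (p - 2) :: complex) = of_nat p - 2" using p2 by (simp add: of_nat_diff)
    then show ?thesis using main cS cA e False by simp
  qed
qed

lemma self0:
  assumes H: "hadamard_plan n D" and d: "d \<in> D"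
  shows "pcorr p (cyc_seq p n g d) (cyc_seq p n g d) 0 = of_nat (p - 1)"
proof -
  have unim: "\<And>k. k < n \<Longrightarrow> cmod (d k) = 1" using H d unfolding hadamard_plan_def by auto
  have "pcorr p (cyc_seq p n g d) (cyc_seq p n g d) 0 = (\<Sum>j<p. if j \<noteq> 0 then 1 else 0)"
    unfolding pcorr_def
  proof (rule sum.cong[OF refl])
    fix j assume "j \<in> {..<p}"
    then have j: "j < p" by simp
    show "cyc_seq p n g d ((j + 0) mod p) * cnj (cyc_seq p n g d j) = (if j \<noteq> 0 then 1 else 0)"
      using j unim[of "dlog j mod n"] n2 unimod_sq by (simp add: seq_eq)
  qed
  also have "\<dots> = of_nat (card {j \<in> {..<p}. j \<noteq> 0})"
    by (simp add: sum.inter_filter[symmetric])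
  also have "{j \<in> {..<p}. j \<noteq> 0} = {1..<p}" by auto
  finally show ?thesis by simp
qed

end

theorem mainTheorem9:
  fixes n p \<alpha> :: nat and D :: "(nat \<Rightarrow> complex) set"
  assumes "n \<ge> 2"
    and "hadamard_plan n D"
    and "prime p" and "[p = 1] (mod n)"
    and "residue_primroot p \<alpha>"
  defines "F \<equiv> periodic_codebook p n \<alpha> D"
  shows "(\<forall>s<p. (\<Sum>f\<in>F. pcorr p f f s) =
            (if s = 0 then of_nat (n - 1) * of_nat (p - 1) else 1 - of_nat n))
     \<and> (\<Sum>s\<in>{1..<p}. (cmod (\<Sum>f\<in>F. pcorr p f f s))^2) = real (p - 1) * real (n - 1)^2
     \<and> (\<Sum>s<p. (cmod (\<Sum>f\<in>F. pcorr p f f s))^2) = real p * real (p - 1) * real (n - 1)^2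
     \<and> pcdf_set p F = of_nat p / of_nat (p - 1)"
proof -
  have ndvd: "n dvd p - 1" using assms(4) cong_to_1_nat by blast
  interpret C: cyc p n \<alpha> using assms ndvd by unfold_locales auto
  have H: "hadamard_plan n D" by fact
  have fin: "finite D" and cD: "card D = n - 1" and pat: "\<And>d. d \<in> D \<Longrightarrow> cyc_pattern n d"
    using H unfolding hadamard_plan_def by auto
  define fs where "fs d = cyc_seq p n \<alpha> d" for d
  have inj: "inj_on fs D"
  proof (rule inj_onI)
    fix d e assume de: "d \<in> D" "e \<in> D" "fs d = fs e"
    show "d = e"
    proof (rule ext)
      fix k
      show "d k = e k"
      proof (cases "k < n")
        case True
        define h where "h = \<alpha>^k mod p"
        have hn: "h mod p \<noteq> 0" unfolding h_def using C.not_dvd_g[of k] by (simp add: dvd_eq_mod_eq_0)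
        have "k < p - 1" using True C.n_le by simp
        then have "C.dlog h = k" unfolding h_def using C.dlog_unique[of k] by (simp add: cong_def)
        then have "fs d h = d k" "fs e h = e k" unfolding fs_def using hn True by (simp_all add: C.seq_eq)
        then show ?thesis using de(3) by simp
      next
        case False
        then show ?thesis using pat[OF de(1)] pat[OF de(2)] unfolding cyc_pattern_def by simp
      qed
    qed
  qed
  have F_eq: "F = fs ` D" unfolding F_def periodic_codebook_def fs_def by simp
  have sumF: "(\<Sum>f\<in>F. \<phi> f) = (\<Sum>d\<in>D. \<phi> (fs d))" for \<phi> :: "(nat \<Rightarrow> complex) \<Rightarrow> complex"
    unfolding F_eq by (rule sum.reindex[OF inj, unfolded comp_def])
  have cF: "card F = n - 1" unfolding F_eq using card_image[OF inj] cD by simp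
  have finF: "finite F" unfolding F_eq using fin by simp
  define V where "V s = (\<Sum>f\<in>F. pcorr p f f s)" for s
  have c1: "\<forall>s<p. V s = (if s = 0 then of_nat (n - 1) * of_nat (p - 1) else 1 - of_nat n)"
    unfolding V_def sumF fs_def using C.sum_corr[OF H] by blast
  have cm: "cmod (1 - of_nat n :: complex) = real (n - 1)"
  proof -
    have "(1 - of_nat n :: complex) = complex_of_real (1 - real n)" by simp
    then have "cmod (1 - of_nat n :: complex) = \<bar>1 - real n\<bar>" by (simp only: norm_of_real)
    then show ?thesis using assms(1) by (simp add: of_nat_diff)
  qed
  have c2: "(\<Sum>s\<in>{1..<p}. (cmod (V s))^2) = real (p - 1) * real (n - 1)^2"
  proof -
    have "(\<Sum>s\<in>{1..<p}. (cmod (V s))^2) = (\<Sum>s\<in>{1..<p}. real (n - 1)^2)"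
      by (rule sum.cong[OF refl]) (use c1 cm in auto)
    then show ?thesis by simp
  qed
  have c0: "cmod (V 0) = real (n - 1) * real (p - 1)"
  proof -
    have "V 0 = complex_of_real (real (n - 1) * real (p - 1))" using c1 C.p2 by simp
    then show ?thesis by (simp only: norm_of_real) simp
  qed
  have c3: "(\<Sum>s<p. (cmod (V s))^2) = real p * real (p - 1) * real (n - 1)^2"
  proof -
    have "{..<p} = insert 0 {1..<p}" using C.p2 by auto
    then have "(\<Sum>s<p. (cmod (V s))^2) = (cmod (V 0))^2 + (\<Sum>s\<in>{1..<p}. (cmod (V s))^2)"
      by simp
    also have "\<dots> = (real (n - 1) * real (p - 1))^2 + real (p - 1) * real (n - 1)^2"
      using c0 c2 by simp
    also have "\<dots> = real p * real (p - 1) * real (n - 1)^2"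
      using C.p2 by (simp add: of_nat_diff power2_eq_square algebra_simps)
    finally show ?thesis .
  qed
  have P0: "pcorr p f f 0 = of_nat (p - 1)" if "f \<in> F" for f
    using that C.self0[OF H] unfolding F_eq fs_def by auto
  have c4: "pcdf_set p F = of_nat p / of_nat (p - 1)"
  proof -
    have q0: "(of_nat (p - 1) :: complex) \<noteq> 0" using C.p2 by simp
    have n0: "(of_nat (n - 1) :: complex) \<noteq> 0" using assms(1) by simp
    have "(\<Sum>f\<in>F. \<Sum>g\<in>F. pcdf_pair p f g) =
          (\<Sum>f\<in>F. \<Sum>g\<in>F. \<Sum>s<p. pcorr p f f s * cnj (pcorr p g g s)) / (of_nat (p - 1) * of_nat (p - 1))"
      unfolding pcdf_pair_def using C.p2 P0 corr_sq[of p]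
      by (simp add: sum_divide_distrib)
    also have "(\<Sum>f\<in>F. \<Sum>g\<in>F. \<Sum>s<p. pcorr p f f s * cnj (pcorr p g g s)) =
               (\<Sum>s<p. \<Sum>f\<in>F. \<Sum>g\<in>F. pcorr p f f s * cnj (pcorr p g g s))"
    proof -
      have "(\<Sum>f\<in>F. \<Sum>g\<in>F. \<Sum>s<p. pcorr p f f s * cnj (pcorr p g g s)) =
            (\<Sum>f\<in>F. \<Sum>s<p. \<Sum>g\<in>F. pcorr p f f s * cnj (pcorr p g g s))"
        by (rule sum.cong[OF refl], rule sum.swap)
      also have "\<dots> = (\<Sum>s<p. \<Sum>f\<in>F. \<Sum>g\<in>F. pcorr p f f s * cnj (pcorr p g g s))"
        by (rule sum.swap)
      finally show ?thesis .
    qed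
    also have "\<dots> = (\<Sum>s<p. V s * cnj (V s))"
      unfolding V_def by (simp add: sum_product)
    also have "\<dots> = (\<Sum>s<p. complex_of_real ((cmod (V s))^2))"
      by (rule sum.cong[OF refl]) (rule complex_norm_square[symmetric])
    also have "\<dots> = complex_of_real (real p * real (p - 1) * real (n - 1)^2)"
      using c3 by (simp only: of_real_sum[symmetric])
    finally have "(\<Sum>f\<in>F. \<Sum>g\<in>F. pcdf_pair p f g) =
        of_nat p * of_nat (p - 1) * (of_nat (n - 1))^2 / (of_nat (p - 1) * of_nat (p - 1))"
      by simp
    also have "\<dots> = of_nat p / of_nat (p - 1) * (of_nat (n - 1))^2"
    proof -
      have gen: "\<And>a q c :: complex. q \<noteq> 0 \<Longrightarrow> a * q * c / (q * q) = a / q * c"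
        by (simp add: field_simps)
      show ?thesis by (rule gen[OF q0])
    qed
    finally have S: "(\<Sum>f\<in>F. \<Sum>g\<in>F. pcdf_pair p f g) = of_nat p / of_nat (p - 1) * (of_nat (n - 1))^2" .
    show ?thesis unfolding pcdf_set_def cF S using n0 by simp
  qed
  show ?thesis using c1 c2 c3 c4 unfolding V_def by blast
qed

end
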